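(* Let $(G,H,\mathcal{L})$ be a cut-and-project scheme, let $U\subseteq H$ be non-empty open and $W\subseteq H$ compact with $U\subseteq W$, and let $\Gamma\subseteq G$ satisfy $\Lambda_U\subseteq\Gamma\subseteq\Lambda_W$. Let $(s_\alpha)$ be a net in $G$ such that $(s_\alpha+\Gamma)$ converges vaguely to some point set $\Gamma'\subseteq G$ and such that $((-s_\alpha,0)+\mathcal{L})$ converges in $(G\times H)/\mathcal{L}$ to some $(s,t)+\mathcal{L}$. Then $\Lambda_{U+t}\subseteq s+\Gamma'\subseteq\Lambda_{W+t}$.
   Context: A cut-and-project scheme $(G,H,\mathcal{L})$ consists of locally compact abelian groups $G,H$ and a discrete cocompact subgroup $\mathcal{L}\subseteq G\times H$ such that $\pi^G|_{\mathcal{L}}$ is injective and $\pi^H(\mathcal{L})$ is dense in $H$. For $W\subseteq H$, $\Lambda_W=\pi^G(\mathcal{L}\cap(G\times W))$. Point sets are identified with their Dirac combs $\sum_{g\in\Lambda}\delta_g$, and convergence of point sets is vague convergence of these measures. $(G\times H)/\mathcal L$ carries the quotient topology. *)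

theory Defs
  imports "HOL-Analysis.Analysis"
begin

definition coset_of :: "'a::ab_group_add set \<Rightarrow> 'a \<Rightarrow> 'a set" where
  "coset_of L x = (\<lambda>l. x + l) ` L"

definition quotient_top :: "'a::{ab_group_add,topological_space} set \<Rightarrow> 'a set topology" where
  "quotient_top L = topology (\<lambda>S. S \<subseteq> range (coset_of L) \<and> open {x. coset_of L x \<in> S})"

definition cut_and_project ::
  "('g::{topological_ab_group_add,t2_space} \<times> 'h::{topological_ab_group_add,t2_space}) set \<Rightarrow> bool" where
  "cut_and_project L \<longleftrightarrow>
     locally_compact_space (euclidean :: 'g topology) \<and>
     locally_compact_space (euclidean :: 'h topology) \<and>
     0 \<in> L \<and> (\<forall>x\<in>L. \<forall>y\<in>L. x + y \<in> L \<and> - x \<in> L) \<and>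
     (\<forall>x\<in>L. \<exists>V. open V \<and> V \<inter> L = {x}) \<and>
     compactin (quotient_top L) (topspace (quotient_top L)) \<and>
     inj_on fst L \<and>
     closure (snd ` L) = UNIV"

definition model_set ::
  "('g \<times> 'h) set \<Rightarrow> 'h set \<Rightarrow> 'g set" where
  "model_set L W = fst ` (L \<inter> (UNIV \<times> W))"

definition point_set :: "'g::topological_space set \<Rightarrow> bool" where
  "point_set \<Lambda> \<longleftrightarrow> (\<forall>K. compact K \<longrightarrow> finite (\<Lambda> \<inter> K))"

definition Cc :: "('g::topological_space \<Rightarrow> complex) set" where
  "Cc = {f. continuous_on UNIV f \<and> compact (closure {x. f x \<noteq> 0})}"

text \<open>Integral of f against the Dirac comb of \<Lambda>.\<close>
definition comb_int :: "'g set \<Rightarrow> ('g \<Rightarrow> complex) \<Rightarrow> complex" where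
  "comb_int \<Lambda> f = (\<Sum>x\<in>{x\<in>\<Lambda>. f x \<noteq> 0}. f x)"

text \<open>Vague convergence of the Dirac combs of a net (given as a filter F) of point sets.\<close>
definition vague_conv :: "('i \<Rightarrow> 'g::topological_space set) \<Rightarrow> 'g set \<Rightarrow> 'i filter \<Rightarrow> bool" where
  "vague_conv \<Lambda>s \<Lambda> F \<longleftrightarrow> (\<forall>f\<in>Cc. ((\<lambda>a. comb_int (\<Lambda>s a) f) \<longlongrightarrow> comb_int \<Lambda> f) F)"

end

theory Submission
  imports Defs
begin


lemma open_binop_nbhd:
  assumes "continuous_on UNIV (\<lambda>p. g (fst p) (snd p))" "open A" "g a b \<in> A"
  obtains N1 N2 where "open N1" "open N2" "a \<in> N1" "b \<in> N2"
    "\<And>x y. x \<in> N1 \<Longrightarrow> y \<in> N2 \<Longrightarrow> g x y \<in> A"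
proof -
  have "open ((\<lambda>p. g (fst p) (snd p)) -` A)" using assms open_vimage by blast
  moreover have "(a,b) \<in> (\<lambda>p. g (fst p) (snd p)) -` A" using assms by simp
  ultimately obtain N1 N2 where "open N1" "open N2" "(a,b) \<in> N1 \<times> N2"
      "N1 \<times> N2 \<subseteq> (\<lambda>p. g (fst p) (snd p)) -` A"
    by (rule open_prod_elim)
  then show ?thesis
  proof (intro that)
    fix x y assume "x \<in> N1" "y \<in> N2"
    then have "(x, y) \<in> N1 \<times> N2" by simp
    then show "g x y \<in> A" using \<open>N1 \<times> N2 \<subseteq> _\<close> by auto
  qed auto
qed

lemma Hausdorff_t2: "Hausdorff_space (euclidean :: 'a::t2_space topology)"
  unfolding Hausdorff_space_def disjnt_def
proof (intro allI impI)
  fix x y :: 'a assume "x \<in> topspace euclidean \<and> y \<in> topspace euclidean \<and> x \<noteq> y"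
  then have "x \<noteq> y" by blast
  from hausdorff[OF this] obtain U V where "open U" "open V" "x \<in> U" "y \<in> V" "U \<inter> V = {}" by blast
  then show "\<exists>U V. openin euclidean U \<and> openin euclidean V \<and> x \<in> U \<and> y \<in> V \<and> U \<inter> V = {}"
    by (intro exI[of _ U] exI[of _ V]) simp
qed

lemma lc_nbhd:
  fixes x :: "'a::t2_space"
  assumes "locally_compact_space (euclidean :: 'a topology)" "open W" "x \<in> W"
  obtains U K where "open U" "compact K" "x \<in> U" "U \<subseteq> K" "K \<subseteq> W"
proof -
  have nb: "neighbourhood_base_of (compactin euclidean) (euclidean :: 'a topology)"
    using locally_compact_space_neighbourhood_base[of "euclidean :: 'a topology", OF disjI1[OF Hausdorff_t2]] assms(1) by simp
  have "openin euclidean W" using assms(2) by simp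
  from nb[unfolded neighbourhood_base_of, rule_format, OF conjI[OF this assms(3)]]
  obtain U V where "openin euclidean U" "compactin euclidean V" "x \<in> U" "U \<subseteq> V" "V \<subseteq> W"
    by blast
  then show ?thesis using that[of U V] by (simp add: compactin_euclidean_iff)
qed

lemma bump:
  fixes x :: "'a::t2_space"
  assumes "locally_compact_space (euclidean :: 'a topology)" "open N" "x \<in> N"
  obtains f :: "'a \<Rightarrow> complex" where "f \<in> Cc" "f x = 1"
    "\<And>z. f z \<noteq> 0 \<Longrightarrow> z \<in> N" "\<And>z. Im (f z) = 0" "\<And>z. Re (f z) \<ge> 0"
proof -
  obtain U K where UK: "open U" "compact K" "x \<in> U" "U \<subseteq> K" "K \<subseteq> N"
    using lc_nbhd[OF assms] by metis
  have cr: "completely_regular_space (euclidean :: 'a topology)"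
    by (rule locally_compact_regular_imp_completely_regular_space[OF assms(1) disjI1[OF Hausdorff_t2]])
  have "closedin euclidean (- U) \<and> x \<in> topspace euclidean - (- U)"
    using UK by (simp add: closed_Compl)
  from cr[unfolded completely_regular_space_def, rule_format, OF this]
  obtain g where g: "continuous_map euclidean (top_of_set {0..1}) g" "g x = (0::real)" "g ` (- U) \<subseteq> {1}"
    by blast
  have gc: "continuous_on UNIV g"
    using g(1) unfolding continuous_map_in_subtopology continuous_map_iff_continuous2 by blast
  have g01: "g z \<in> {0..1}" for z using g(1) unfolding continuous_map_in_subtopology by auto
  define f where "f z = complex_of_real (1 - g z)" for z
  have fU: "z \<in> U" if "f z \<noteq> 0" for z
  proof -
    have "g z \<noteq> 1" using that by (auto simp: f_def)
    then show "z \<in> U" using g(3) by blast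
  qed
  have "continuous_on UNIV f" unfolding f_def
    by (intro continuous_intros gc)
  moreover have "compact (closure {z. f z \<noteq> 0})"
  proof -
    have "{z. f z \<noteq> 0} \<subseteq> K" using fU UK by blast
    then have sub: "closure {z. f z \<noteq> 0} \<subseteq> K"
      using closure_minimal compact_imp_closed[OF UK(2)] by blast
    have "compact (K \<inter> closure {z. f z \<noteq> 0})"
      using compact_Int_closed[OF UK(2) closed_closure] by blast
    then show ?thesis using Int_absorb1[OF sub] by simp
  qed
  ultimately have fCc: "f \<in> Cc" unfolding Cc_def by simp
  have f1: "f x = 1" using g(2) by (simp add: f_def)
  have fN: "z \<in> N" if "f z \<noteq> 0" for z using fU[OF that] UK by blast
  have fIm: "Im (f z) = 0" for z by (simp add: f_def)
  have fRe: "Re (f z) \<ge> 0" for z using g01[of z] by (simp add: f_def)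
  show ?thesis by (rule that[OF fCc f1 fN fIm fRe])
qed

lemma loc_fin_nbhd:
  fixes x :: "'a::t2_space"
  assumes "locally_compact_space (euclidean :: 'a topology)" "point_set P"
  obtains N where "open N" "x \<in> N" "N \<inter> P \<subseteq> {x}"
proof -
  obtain U K where UK: "open U" "compact K" "x \<in> U" "U \<subseteq> K"
    using lc_nbhd[OF assms(1) open_UNIV UNIV_I] by metis
  have fin: "finite (P \<inter> K - {x})" using assms(2) UK unfolding point_set_def by blast
  have "open (U - (P \<inter> K - {x}))" using UK(1) fin by (simp add: finite_imp_closed open_Diff)
  moreover have "x \<in> U - (P \<inter> K - {x})" using UK by blast
  moreover have "(U - (P \<inter> K - {x})) \<inter> P \<subseteq> {x}" using UK by blast
  ultimately show ?thesis using that by blast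
qed

lemma subsing_finite: "(\<And>a b. a \<in> S \<Longrightarrow> b \<in> S \<Longrightarrow> a = b) \<Longrightarrow> finite S"
proof (cases "S = {}")
  case False
  then obtain a where "a \<in> S" by blast
  moreover assume "\<And>a b. a \<in> S \<Longrightarrow> b \<in> S \<Longrightarrow> a = b"
  ultimately have "S \<subseteq> {a}" by blast
  then show ?thesis using finite_subset by blast
qed simp

lemma finite_L:
  fixes L :: "('g::topological_ab_group_add \<times> 'h::topological_ab_group_add) set"
  assumes sub: "\<forall>x\<in>L. \<forall>y\<in>L. x + y \<in> L \<and> - x \<in> L" and disc: "\<exists>V. open V \<and> V \<inter> L = {0}"
    and K: "compact K"
  shows "finite (L \<inter> K)"
proof -
  obtain V where V: "open V" "V \<inter> L = {0}" using disc by blast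
  then have "(0,0) \<in> V" by (auto simp: zero_prod_def)
  then obtain A B where AB: "open A" "open B" "(0,0) \<in> A \<times> B" "A \<times> B \<subseteq> V"
    using open_prod_elim[OF V(1) \<open>(0,0) \<in> V\<close>] by blast
  have cg: "continuous_on UNIV (\<lambda>p::'g\<times>'g. fst p - snd p)" by (intro continuous_intros)
  have ch: "continuous_on UNIV (\<lambda>p::'h\<times>'h. fst p - snd p)" by (intro continuous_intros)
  obtain A1 A2 where A12: "open A1" "open A2" "0 \<in> A1" "0 \<in> A2" "\<And>x y. x \<in> A1 \<Longrightarrow> y \<in> A2 \<Longrightarrow> x - y \<in> A"
    using open_binop_nbhd[where g="\<lambda>x y. x - y", OF cg AB(1), of 0 0] AB(3) by auto
  obtain B1 B2 where B12: "open B1" "open B2" "0 \<in> B1" "0 \<in> B2" "\<And>x y. x \<in> B1 \<Longrightarrow> y \<in> B2 \<Longrightarrow> x - y \<in> B"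
    using open_binop_nbhd[where g="\<lambda>x y. x - y", OF ch AB(2), of 0 0] AB(3) by auto
  define A0 where "A0 = A1 \<inter> A2"
  define B0 where "B0 = B1 \<inter> B2"
  define C where "C k = (\<lambda>z. (fst z - fst k, snd z - snd k)) -` (A0 \<times> B0)" for k :: "'g \<times> 'h"
  have oC: "open (C k)" for k
    unfolding C_def A0_def B0_def
    by (intro open_vimage open_Times open_Int A12 B12 continuous_intros)
  have "K \<subseteq> \<Union> (C ` K)"
    using A12 B12 by (force simp: C_def A0_def B0_def)
  then obtain T where T: "T \<subseteq> K" "finite T" "K \<subseteq> \<Union> (C ` T)"
  proof -
    from compactE_image[OF K, of K C, OF oC \<open>K \<subseteq> \<Union> (C ` K)\<close>]
    show ?thesis using that by blast
  qed
  have "L \<inter> K \<subseteq> (\<Union>k\<in>T. L \<inter> C k)" using T by blast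
  moreover have "finite (L \<inter> C k)" for k
  proof (rule subsing_finite)
    fix l1 l2 assume l: "l1 \<in> L \<inter> C k" "l2 \<in> L \<inter> C k"
    have "l1 - l2 \<in> L" using sub l by (metis IntD1 diff_conv_add_uminus)
    moreover have "fst l1 - fst l2 \<in> A"
      using A12(5)[of "fst l1 - fst k" "fst l2 - fst k"] l by (auto simp: C_def A0_def)
    moreover have "snd l1 - snd l2 \<in> B"
      using B12(5)[of "snd l1 - snd k" "snd l2 - snd k"] l by (auto simp: C_def B0_def)
    ultimately have "l1 - l2 \<in> V \<inter> L" using AB(4) by (auto simp: minus_prod_def)
    then show "l1 = l2" using V(2) by auto
  qed
  then have "finite (\<Union>k\<in>T. L \<inter> C k)" using T(2) by blast
  ultimately show ?thesis by (rule finite_subset)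
qed

lemma coset_self: "0 \<in> L \<Longrightarrow> x \<in> coset_of L x"
  unfolding coset_of_def by (rule image_eqI[of _ _ 0]) simp_all

lemma coset_eqD:
  assumes "0 \<in> L" "coset_of L x = coset_of L p"
  shows "p - x \<in> L"
proof -
  have "p \<in> coset_of L x" using coset_self[OF assms(1)] assms(2) by metis
  then obtain l where "l \<in> L" "p = x + l" unfolding coset_of_def by blast
  then show ?thesis by simp
qed

lemma coset_add:
  fixes L :: "'a::ab_group_add set"
  assumes sub: "\<forall>x\<in>L. \<forall>y\<in>L. x + y \<in> L \<and> - x \<in> L" and "l \<in> L"
  shows "coset_of L (x + l) = coset_of L x"
proof
  show "coset_of L (x + l) \<subseteq> coset_of L x"
  proof
    fix z assume "z \<in> coset_of L (x + l)"
    then obtain m where m: "m \<in> L" "z = x + l + m" unfolding coset_of_def by blast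
    have "l + m \<in> L" using sub m assms(2) by blast
    moreover have "z = x + (l + m)" using m by (simp add: add.assoc)
    ultimately show "z \<in> coset_of L x" unfolding coset_of_def by blast
  qed
  show "coset_of L x \<subseteq> coset_of L (x + l)"
  proof
    fix z assume "z \<in> coset_of L x"
    then obtain m where m: "m \<in> L" "z = x + m" unfolding coset_of_def by blast
    have "m + - l \<in> L" using sub m assms(2) by blast
    moreover have "z = x + l + (m + - l)" using m by simp
    ultimately show "z \<in> coset_of L (x + l)" unfolding coset_of_def by blast
  qed
qed

lemma istop_quot: "istopology (\<lambda>S. S \<subseteq> range (coset_of L) \<and> open {x. coset_of L x \<in> S})"
proof -
  have 1: "{x. coset_of L x \<in> S \<inter> T} = {x. coset_of L x \<in> S} \<inter> {x. coset_of L x \<in> T}" for S T by auto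
  have 2: "{x. coset_of L x \<in> \<Union>K} = \<Union> ((\<lambda>S. {x. coset_of L x \<in> S}) ` K)" for K by auto
  show ?thesis unfolding istopology_def
  proof (intro conjI; intro allI impI)
    fix S T assume aS: "S \<subseteq> range (coset_of L) \<and> open {x. coset_of L x \<in> S}"
      and aT: "T \<subseteq> range (coset_of L) \<and> open {x. coset_of L x \<in> T}"
    show "S \<inter> T \<subseteq> range (coset_of L) \<and> open {x. coset_of L x \<in> S \<inter> T}"
    proof (rule conjI)
      show "S \<inter> T \<subseteq> range (coset_of L)" using aS by blast
      show "open {x. coset_of L x \<in> S \<inter> T}" unfolding 1
        by (rule open_Int[OF conjunct2[OF aS] conjunct2[OF aT]])
    qed
  next
    fix K assume a: "\<forall>S\<in>K. S \<subseteq> range (coset_of L) \<and> open {x. coset_of L x \<in> S}"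
    have o: "open (\<Union> ((\<lambda>S. {x. coset_of L x \<in> S}) ` K))" by (rule open_UN) (use a in blast)
    show "\<Union>K \<subseteq> range (coset_of L) \<and> open {x. coset_of L x \<in> \<Union>K}"
    proof (rule conjI)
      show "\<Union>K \<subseteq> range (coset_of L)" using a by blast
      show "open {x. coset_of L x \<in> \<Union>K}" unfolding 2 by (rule o)
    qed
  qed
qed

lemma openin_quot:
  fixes L :: "('g::topological_ab_group_add \<times> 'h::topological_ab_group_add) set"
  assumes sub: "\<forall>x\<in>L. \<forall>y\<in>L. x + y \<in> L \<and> - x \<in> L" and "0 \<in> L" and "open V"
  shows "openin (quotient_top L) (coset_of L ` V)"
proof -
  have eq: "{x. coset_of L x \<in> coset_of L ` V} = (\<Union>l\<in>L. (\<lambda>x. (fst x + fst l, snd x + snd l)) -` V)"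
  proof (intro equalityI subsetI)
    fix x assume "x \<in> {x. coset_of L x \<in> coset_of L ` V}"
    then obtain p where p: "p \<in> V" "coset_of L x = coset_of L p" by auto
    then have "p - x \<in> L" using coset_eqD assms(2) by blast
    moreover have "(fst x + fst (p - x), snd x + snd (p - x)) = p" by simp
    ultimately show "x \<in> (\<Union>l\<in>L. (\<lambda>x. (fst x + fst l, snd x + snd l)) -` V)" using p by force
  next
    fix x assume "x \<in> (\<Union>l\<in>L. (\<lambda>x. (fst x + fst l, snd x + snd l)) -` V)"
    then obtain l where l: "l \<in> L" "x + l \<in> V" by (auto simp: plus_prod_def)
    then have "coset_of L x = coset_of L (x + l)" using coset_add[OF sub] by metis
    then show "x \<in> {x. coset_of L x \<in> coset_of L ` V}" using l by blast
  qed
  have "open {x. coset_of L x \<in> coset_of L ` V}"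
    unfolding eq
  proof (rule open_UN, rule ballI)
    fix l assume "l \<in> L"
    have "continuous_on UNIV (\<lambda>x::'g\<times>'h. (fst x + fst l, snd x + snd l))"
      by (intro continuous_on_Pair continuous_on_add continuous_on_fst continuous_on_snd continuous_on_id continuous_on_const)
    then show "open ((\<lambda>x. (fst x + fst l, snd x + snd l)) -` V)" using open_vimage assms(3) by blast
  qed
  then show ?thesis unfolding quotient_top_def topology_inverse'[OF istop_quot] by auto
qed

lemma quot_lift:
  fixes L :: "('g::topological_ab_group_add \<times> 'h::topological_ab_group_add) set"
  assumes sub: "\<forall>x\<in>L. \<forall>y\<in>L. x + y \<in> L \<and> - x \<in> L" and "0 \<in> L"
    and lim: "limitin (quotient_top L) (\<lambda>a. coset_of L (g a)) (coset_of L c) F"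
    and "open V" "c \<in> V"
  shows "eventually (\<lambda>a. \<exists>p\<in>V. p - g a \<in> L) F"
proof -
  have "eventually (\<lambda>a. coset_of L (g a) \<in> coset_of L ` V) F"
    using lim openin_quot[OF sub assms(2,4)] assms(5) unfolding limitin_def by blast
  then show ?thesis
  proof (rule eventually_mono)
    fix a assume "coset_of L (g a) \<in> coset_of L ` V"
    then obtain p where "p \<in> V" "coset_of L (g a) = coset_of L p" by blast
    then show "\<exists>p\<in>V. p - g a \<in> L" using coset_eqD[OF assms(2)] by blast
  qed
qed



lemma fin_shift:
  fixes L :: "('g::{topological_ab_group_add,t2_space} \<times> 'h::{topological_ab_group_add,t2_space}) set"
  assumes sub: "\<forall>x\<in>L. \<forall>y\<in>L. x + y \<in> L \<and> - x \<in> L" and disc: "\<exists>V. open V \<and> V \<inter> L = {0}"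
    and W: "compact W" and G: "\<Gamma> \<subseteq> model_set L W" and K: "compact K"
  shows "finite {z \<in> (\<lambda>x. c + x) ` \<Gamma>. z \<in> K}"
proof -
  define K' where "K' = (\<lambda>z. z - c) ` K"
  have cK': "compact K'" unfolding K'_def
    by (rule compact_continuous_image[OF _ K]) (intro continuous_intros)
  have "finite (L \<inter> (K' \<times> W))" by (rule finite_L[OF sub disc compact_Times[OF cK' W]])
  then have fin: "finite ((\<lambda>x. c + x) ` (fst ` (L \<inter> (K' \<times> W))))" by (intro finite_imageI)
  have "{z \<in> (\<lambda>x. c + x) ` \<Gamma>. z \<in> K} \<subseteq> (\<lambda>x. c + x) ` (fst ` (L \<inter> (K' \<times> W)))"
  proof
    fix z assume "z \<in> {z \<in> (\<lambda>x. c + x) ` \<Gamma>. z \<in> K}"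
    then obtain x where x: "x \<in> \<Gamma>" "z = c + x" "z \<in> K" by blast
    then have "x \<in> model_set L W" using G by blast
    then obtain w where w: "(x, w) \<in> L" "w \<in> W" unfolding model_set_def by auto
    have "x \<in> K'" unfolding K'_def using x by (intro image_eqI[of x _ z]) auto
    then have "x \<in> fst ` (L \<inter> (K' \<times> W))" using w by (intro image_eqI[of x _ "(x, w)"]) auto
    then show "z \<in> (\<lambda>x. c + x) ` (fst ` (L \<inter> (K' \<times> W)))" using x by blast
  qed
  then show ?thesis by (rule finite_subset[OF _ fin])
qed

lemma fin_comb:
  fixes L :: "('g::{topological_ab_group_add,t2_space} \<times> 'h::{topological_ab_group_add,t2_space}) set"
  assumes sub: "\<forall>x\<in>L. \<forall>y\<in>L. x + y \<in> L \<and> - x \<in> L" and disc: "\<exists>V. open V \<and> V \<inter> L = {0}"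
    and W: "compact W" and G: "\<Gamma> \<subseteq> model_set L W" and f: "f \<in> Cc"
  shows "finite {z \<in> (\<lambda>x. c + x) ` \<Gamma>. f z \<noteq> 0}"
proof -
  have "compact (closure {x. f x \<noteq> 0})" using f unfolding Cc_def by simp
  then have fin: "finite {z \<in> (\<lambda>x. c + x) ` \<Gamma>. z \<in> closure {x. f x \<noteq> 0}}"
    by (rule fin_shift[OF sub disc W G])
  have "{z \<in> (\<lambda>x. c + x) ` \<Gamma>. f z \<noteq> 0} \<subseteq> {z \<in> (\<lambda>x. c + x) ` \<Gamma>. z \<in> closure {x. f x \<noteq> 0}}"
    using closure_subset[of "{x. f x \<noteq> 0}"] by auto
  then show ?thesis by (rule finite_subset[OF _ fin])
qed



lemma part1:
  fixes L :: "('g::{topological_ab_group_add,t2_space} \<times> 'h::{topological_ab_group_add,t2_space}) set"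
  assumes lcG: "locally_compact_space (euclidean :: 'g topology)"
    and sub: "\<forall>x\<in>L. \<forall>y\<in>L. x + y \<in> L \<and> - x \<in> L" and L0: "0 \<in> L"
    and disc: "\<exists>V. open V \<and> V \<inter> L = {0}" and W: "compact W"
    and oU: "open U" and G1: "model_set L U \<subseteq> \<Gamma>" and G2: "\<Gamma> \<subseteq> model_set L W"
    and Fnb: "F \<noteq> bot" and pG': "point_set \<Gamma>'"
    and vc: "vague_conv (\<lambda>a. (\<lambda>x. sa a + x) ` \<Gamma>) \<Gamma>' F"
    and lim: "limitin (quotient_top L) (\<lambda>a. coset_of L (- sa a, 0)) (coset_of L (s, t)) F"
  shows "model_set L ((\<lambda>u. u + t) ` U) \<subseteq> (\<lambda>x. s + x) ` \<Gamma>'"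
proof
  fix x assume "x \<in> model_set L ((\<lambda>u. u + t) ` U)"
  then obtain xs u where xL: "(x, xs) \<in> L" "u \<in> U" "xs = u + t" unfolding model_set_def by auto
  have "x - s \<in> \<Gamma>'"
  proof (rule ccontr)
    assume nG: "x - s \<notin> \<Gamma>'"
    obtain N where N: "open N" "x - s \<in> N" "N \<inter> \<Gamma>' \<subseteq> {x - s}"
      using loc_fin_nbhd[OF lcG pG'] by metis
    obtain f where f: "f \<in> Cc" "f (x - s) = 1" "\<And>z. f z \<noteq> 0 \<Longrightarrow> z \<in> N"
        "\<And>z. Im (f z) = 0" "\<And>z. Re (f z) \<ge> 0"
      using bump[OF lcG N(1,2)] by metis
    have "{z \<in> \<Gamma>'. f z \<noteq> 0} = {}"
    proof -
      have "z \<notin> \<Gamma>'" if "f z \<noteq> 0" for z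
        using f(3)[OF that] N(3) nG by auto
      then show ?thesis by auto
    qed
    then have c0: "comb_int \<Gamma>' f = 0" unfolding comb_int_def by simp
    have limf: "((\<lambda>a. comb_int ((\<lambda>x. sa a + x) ` \<Gamma>) f) \<longlongrightarrow> 0) F"
      using vc f(1) c0 unfolding vague_conv_def by auto
    have ev1: "eventually (\<lambda>a. norm (comb_int ((\<lambda>x. sa a + x) ` \<Gamma>) f) < 1/2) F"
      using tendstoD[OF limf, of "1/2"] by (simp add: dist_norm)
    have fc: "continuous_on UNIV f" using f(1) unfolding Cc_def by simp
    define Ob where "Ob = f -` ball 1 (1/2)"
    have oO: "open Ob" unfolding Ob_def by (rule open_vimage[OF open_ball fc])
    have "x - s \<in> Ob" unfolding Ob_def using f(2) by simp
    moreover have "continuous_on UNIV (\<lambda>p::'g\<times>'g. fst p - snd p)" by (intro continuous_intros)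
    ultimately obtain N1 N2 where N12: "open N1" "open N2" "x \<in> N1" "s \<in> N2"
        "\<And>a b. a \<in> N1 \<Longrightarrow> b \<in> N2 \<Longrightarrow> a - b \<in> Ob"
      using open_binop_nbhd[where g="\<lambda>a b. a - b" and a=x and b=s and A=Ob] oO by blast
    define B where "B = (\<lambda>h. xs - h) -` U"
    have oB: "open B" unfolding B_def by (rule open_vimage[OF oU]) (intro continuous_intros)
    have tB: "t \<in> B" unfolding B_def using xL by simp
    have ev2: "eventually (\<lambda>a. \<exists>p\<in>N2 \<times> B. p - (- sa a, 0) \<in> L) F"
      by (rule quot_lift[OF sub L0 lim open_Times[OF N12(2) oB]]) (use N12(4) tB in simp)
    obtain a where a1: "norm (comb_int ((\<lambda>x. sa a + x) ` \<Gamma>) f) < 1/2"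
      and a2: "\<exists>p\<in>N2 \<times> B. p - (- sa a, 0) \<in> L"
      using eventually_happens'[OF Fnb eventually_conj[OF ev1 ev2]] by blast
    obtain p1 p2 where p: "p1 \<in> N2" "p2 \<in> B" "(p1, p2) - (- sa a, 0) \<in> L"
      using a2 by auto
    have lL: "(p1 + sa a, p2) \<in> L" using p(3) by simp
    have "(x, xs) + - (p1 + sa a, p2) \<in> L" using sub xL(1) lL by blast
    then have qL: "(x - p1 - sa a, xs - p2) \<in> L" by (simp add: algebra_simps)
    have "xs - p2 \<in> U" using p(2) unfolding B_def by simp
    then have "x - p1 - sa a \<in> model_set L U" unfolding model_set_def
      using qL by (intro image_eqI[of _ fst "(x - p1 - sa a, xs - p2)"]) auto
    then have gam: "x - p1 - sa a \<in> \<Gamma>" using G1 by blast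
    define z where "z = x - p1"
    have zL: "z \<in> (\<lambda>x. sa a + x) ` \<Gamma>" unfolding z_def
      using gam by (intro image_eqI[of _ _ "x - p1 - sa a"]) (auto simp: algebra_simps)
    have "z \<in> Ob" unfolding z_def using N12(5)[OF N12(3) p(1)] .
    then have "dist (f z) 1 < 1/2" unfolding Ob_def by (simp add: dist_commute)
    then have "\<bar>Re (f z - 1)\<bar> < 1/2" using abs_Re_le_cmod[of "f z - 1"] by (simp add: dist_norm)
    then have "\<bar>Re (f z) - 1\<bar> < 1/2" by simp
    then have Rez: "Re (f z) > 1/2" using abs_less_iff[of "Re (f z) - 1" "1/2"] by linarith
    define S where "S = {y \<in> (\<lambda>x. sa a + x) ` \<Gamma>. f y \<noteq> 0}"
    have finS: "finite S" unfolding S_def by (rule fin_comb[OF sub disc W G2 f(1)])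
    have zS: "z \<in> S" unfolding S_def using zL Rez by auto
    have "Re (f z) \<le> (\<Sum>y\<in>S. Re (f y))"
      by (rule member_le_sum[OF zS f(5) finS])
    also have "\<dots> = Re (comb_int ((\<lambda>x. sa a + x) ` \<Gamma>) f)"
      unfolding comb_int_def S_def by (simp add: Re_sum)
    also have "\<dots> \<le> norm (comb_int ((\<lambda>x. sa a + x) ` \<Gamma>) f)" by (rule complex_Re_le_cmod)
    finally show False using a1 Rez by simp
  qed
  then show "x \<in> (\<lambda>x. s + x) ` \<Gamma>'" by (intro image_eqI[of _ _ "x - s"]) auto
qed



lemma part2:
  fixes L :: "('g::{topological_ab_group_add,t2_space} \<times> 'h::{topological_ab_group_add,t2_space}) set"
  assumes lcG: "locally_compact_space (euclidean :: 'g topology)"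
    and lcH: "locally_compact_space (euclidean :: 'h topology)"
    and sub: "\<forall>x\<in>L. \<forall>y\<in>L. x + y \<in> L \<and> - x \<in> L" and L0: "0 \<in> L"
    and disc: "\<exists>V. open V \<and> V \<inter> L = {0}" and W: "compact W"
    and G2: "\<Gamma> \<subseteq> model_set L W"
    and Fnb: "F \<noteq> bot" and pG': "point_set \<Gamma>'"
    and vc: "vague_conv (\<lambda>a. (\<lambda>x. sa a + x) ` \<Gamma>) \<Gamma>' F"
    and lim: "limitin (quotient_top L) (\<lambda>a. coset_of L (- sa a, 0)) (coset_of L (s, t)) F"
  shows "(\<lambda>x. s + x) ` \<Gamma>' \<subseteq> model_set L ((\<lambda>w. w + t) ` W)"
proof
  fix z assume "z \<in> (\<lambda>x. s + x) ` \<Gamma>'"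
  then obtain y where y: "y \<in> \<Gamma>'" "z = s + y" by blast
  show "z \<in> model_set L ((\<lambda>w. w + t) ` W)"
  proof (rule ccontr)
    assume nm: "z \<notin> model_set L ((\<lambda>w. w + t) ` W)"
    obtain U1 C1 where UC1: "open U1" "compact C1" "z \<in> U1" "U1 \<subseteq> C1"
      using lc_nbhd[OF lcG open_UNIV UNIV_I] by metis
    obtain U2 C2 where UC2: "open U2" "compact C2" "(0::'h) \<in> U2" "U2 \<subseteq> C2"
      using lc_nbhd[OF lcH open_UNIV UNIV_I] by metis
    define P where "P = {p \<in> L. fst p \<in> C1 \<and> snd p - t \<in> (\<lambda>q. fst q + snd q) ` (W \<times> C2)}"
    have finP: "finite P"
    proof -
      have cc: "compact ((\<lambda>q. fst q + snd q + t) ` (W \<times> C2))"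
        by (rule compact_continuous_image[OF _ compact_Times[OF W UC2(2)]]) (intro continuous_intros)
      have "P \<subseteq> L \<inter> (C1 \<times> (\<lambda>q. fst q + snd q + t) ` (W \<times> C2))"
      proof
        fix p assume "p \<in> P"
        then have p: "p \<in> L" "fst p \<in> C1" "snd p - t \<in> (\<lambda>q. fst q + snd q) ` (W \<times> C2)"
          unfolding P_def by auto
        then obtain q where q: "q \<in> W \<times> C2" "snd p - t = fst q + snd q" by blast
        then have "snd p = fst q + snd q + t" by (simp add: algebra_simps)
        then have "snd p \<in> (\<lambda>q. fst q + snd q + t) ` (W \<times> C2)" using q(1) by blast
        then show "p \<in> L \<inter> (C1 \<times> (\<lambda>q. fst q + snd q + t) ` (W \<times> C2))"
          using p by (cases p) auto
      qed
      moreover have "finite (L \<inter> (C1 \<times> (\<lambda>q. fst q + snd q + t) ` (W \<times> C2)))"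
        by (rule finite_L[OF sub disc compact_Times[OF UC1(2) cc]])
      ultimately show ?thesis by (rule finite_subset)
    qed
    have ex: "\<forall>p\<in>P. \<exists>A B. open A \<and> open B \<and> z \<in> A \<and> 0 \<in> B \<and>
                 \<not> (fst p \<in> A \<and> snd p - t \<in> (\<lambda>q. fst q + snd q) ` (W \<times> B))"
    proof
      fix p assume pP: "p \<in> P"
      show "\<exists>A B. open A \<and> open B \<and> z \<in> A \<and> 0 \<in> B \<and>
                 \<not> (fst p \<in> A \<and> snd p - t \<in> (\<lambda>q. fst q + snd q) ` (W \<times> B))"
      proof (cases "fst p = z")
        case False
        then have "z \<noteq> fst p" by simp
        then obtain A where A: "open A" "z \<in> A" "fst p \<notin> A" using separation_t1 by blast
        show ?thesis by (rule exI[of _ A], rule exI[of _ UNIV]) (use A in simp)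
      next
        case True
        have nW: "snd p - t \<notin> W"
        proof
          assume "snd p - t \<in> W"
          then have "snd p \<in> (\<lambda>w. w + t) ` W" by (intro image_eqI[of _ _ "snd p - t"]) auto
          moreover have "p \<in> L" using pP unfolding P_def by simp
          ultimately have "p \<in> L \<inter> (UNIV \<times> (\<lambda>w. w + t) ` W)" by (simp add: mem_Times_iff)
          then have "fst p \<in> model_set L ((\<lambda>w. w + t) ` W)" unfolding model_set_def by (rule imageI)
          then show False using nm True by simp
        qed
        define B where "B = (\<lambda>b. snd p - t - b) -` (- W)"
        have oB: "open B" unfolding B_def
          by (rule open_vimage[OF open_Compl[OF compact_imp_closed[OF W]]]) (intro continuous_intros)
        have B0: "0 \<in> B" unfolding B_def using nW by simp
        have "snd p - t \<notin> (\<lambda>q. fst q + snd q) ` (W \<times> B)"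
        proof
          assume "snd p - t \<in> (\<lambda>q. fst q + snd q) ` (W \<times> B)"
          then obtain w b where wb: "w \<in> W" "b \<in> B" "snd p - t = w + b" by auto
          then have "snd p - t - b = w" by (simp add: algebra_simps)
          then show False using wb(1,2) unfolding B_def by simp
        qed
        then show ?thesis by (rule_tac exI[of _ UNIV], rule_tac exI[of _ B]) (use oB B0 in simp)
      qed
    qed
    from bchoice[OF ex] obtain A where "\<forall>p\<in>P. \<exists>B. open (A p) \<and> open B \<and> z \<in> A p \<and> 0 \<in> B \<and>
                 \<not> (fst p \<in> A p \<and> snd p - t \<in> (\<lambda>q. fst q + snd q) ` (W \<times> B))" by blast
    from bchoice[OF this] obtain B where AB: "\<forall>p\<in>P. open (A p) \<and> open (B p) \<and> z \<in> A p \<and> 0 \<in> B p \<and>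
                 \<not> (fst p \<in> A p \<and> snd p - t \<in> (\<lambda>q. fst q + snd q) ` (W \<times> B p))" by blast
    define As where "As = U1 \<inter> \<Inter> (A ` P)"
    define Bs where "Bs = U2 \<inter> \<Inter> (B ` P)"
    have oAs: "open As" unfolding As_def
      by (rule open_Int[OF UC1(1) open_INT[OF finP]]) (use AB in blast)
    have oBs: "open Bs" unfolding Bs_def
      by (rule open_Int[OF UC2(1) open_INT[OF finP]]) (use AB in blast)
    have zAs: "z \<in> As" unfolding As_def using AB UC1(3) by blast
    have zBs: "0 \<in> Bs" unfolding Bs_def using AB UC2(3) by blast
    have "(\<lambda>a b. b + a) y s \<in> As" using zAs y(2) by simp
    moreover have "continuous_on UNIV (\<lambda>p::'g\<times>'g. snd p + fst p)" by (intro continuous_intros)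
    ultimately obtain N1 N2 where N12: "open N1" "open N2" "y \<in> N1" "s \<in> N2"
        "\<And>a b. a \<in> N1 \<Longrightarrow> b \<in> N2 \<Longrightarrow> b + a \<in> As"
      using open_binop_nbhd[where g="\<lambda>a b. b + a" and a=y and b=s and A=As] oAs by blast
    obtain N3 where N3: "open N3" "y \<in> N3" "N3 \<inter> \<Gamma>' \<subseteq> {y}"
      using loc_fin_nbhd[OF lcG pG'] by metis
    have yN: "y \<in> N1 \<inter> N3" using N12(3) N3(2) by blast
    obtain f where f: "f \<in> Cc" "f y = 1" "\<And>x. f x \<noteq> 0 \<Longrightarrow> x \<in> N1 \<inter> N3"
        "\<And>z. Im (f z) = 0" "\<And>z. Re (f z) \<ge> 0"
      using bump[OF lcG open_Int[OF N12(1) N3(1)] yN] by metis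
    have "{x \<in> \<Gamma>'. f x \<noteq> 0} = {y}"
    proof
      show "{x \<in> \<Gamma>'. f x \<noteq> 0} \<subseteq> {y}"
      proof
        fix x assume "x \<in> {x \<in> \<Gamma>'. f x \<noteq> 0}"
        then have "x \<in> N3 \<inter> \<Gamma>'" using f(3) by blast
        then show "x \<in> {y}" using N3(3) by blast
      qed
      show "{y} \<subseteq> {x \<in> \<Gamma>'. f x \<noteq> 0}" using y(1) f(2) by simp
    qed
    then have c1: "comb_int \<Gamma>' f = 1" unfolding comb_int_def using f(2) by simp
    have limf: "((\<lambda>a. comb_int ((\<lambda>x. sa a + x) ` \<Gamma>) f) \<longlongrightarrow> 1) F"
      using vc f(1) c1 unfolding vague_conv_def by auto
    have ev1: "eventually (\<lambda>a. dist (comb_int ((\<lambda>x. sa a + x) ` \<Gamma>) f) 1 < 1) F"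
      using tendstoD[OF limf, of 1] by simp
    define V where "V = N2 \<times> ((\<lambda>h. h - t) -` Bs)"
    have oV: "open V" unfolding V_def
      by (rule open_Times[OF N12(2) open_vimage[OF oBs]]) (intro continuous_intros)
    have stV: "(s, t) \<in> V" unfolding V_def using N12(4) zBs by simp
    have ev2: "eventually (\<lambda>a. \<exists>p\<in>V. p - (- sa a, 0) \<in> L) F"
      by (rule quot_lift[OF sub L0 lim oV stV])
    obtain a where a1: "dist (comb_int ((\<lambda>x. sa a + x) ` \<Gamma>) f) 1 < 1"
      and a2: "\<exists>p\<in>V. p - (- sa a, 0) \<in> L"
      using eventually_happens'[OF Fnb eventually_conj[OF ev1 ev2]] by blast
    have cn0: "comb_int ((\<lambda>x. sa a + x) ` \<Gamma>) f \<noteq> 0" using a1 by auto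
    have "{x \<in> (\<lambda>x. sa a + x) ` \<Gamma>. f x \<noteq> 0} \<noteq> {}"
    proof
      assume e: "{x \<in> (\<lambda>x. sa a + x) ` \<Gamma>. f x \<noteq> 0} = {}"
      have "comb_int ((\<lambda>x. sa a + x) ` \<Gamma>) f = 0" unfolding comb_int_def e by simp
      then show False using cn0 by simp
    qed
    then obtain w where w: "w \<in> (\<lambda>x. sa a + x) ` \<Gamma>" "f w \<noteq> 0" by blast
    then obtain \<gamma> where gam: "\<gamma> \<in> \<Gamma>" "w = sa a + \<gamma>" by blast
    have wN1: "w \<in> N1" using f(3)[OF w(2)] by blast
    have "\<gamma> \<in> model_set L W" using gam(1) G2 by blast
    then obtain \<gamma>s where gs: "(\<gamma>, \<gamma>s) \<in> L" "\<gamma>s \<in> W" unfolding model_set_def by auto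
    obtain p1 p2 where p: "p1 \<in> N2" "p2 - t \<in> Bs" "(p1, p2) - (- sa a, 0) \<in> L"
      using a2 unfolding V_def by auto
    have lL: "(p1 + sa a, p2) \<in> L" using p(3) by simp
    have "(\<gamma>, \<gamma>s) + (p1 + sa a, p2) \<in> L" using sub gs(1) lL by blast
    then have qL: "(p1 + w, \<gamma>s + p2) \<in> L" using gam(2) by (simp add: algebra_simps)
    define q where "q = (p1 + w, \<gamma>s + p2)"
    have fq: "fst q \<in> As" unfolding q_def using N12(5)[OF wN1 p(1)] by simp
    have sq: "snd q - t = \<gamma>s + (p2 - t)" unfolding q_def by (simp add: algebra_simps)
    have "q \<in> P"
    proof -
      have "fst q \<in> C1" using fq UC1(4) unfolding As_def by blast
      moreover have "p2 - t \<in> C2" using p(2) UC2(4) unfolding Bs_def by blast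
      then have "snd q - t \<in> (\<lambda>q. fst q + snd q) ` (W \<times> C2)"
        unfolding sq using gs(2) by (intro image_eqI[of _ _ "(\<gamma>s, p2 - t)"]) auto
      ultimately show ?thesis unfolding P_def using qL q_def by simp
    qed
    then have nq: "\<not> (fst q \<in> A q \<and> snd q - t \<in> (\<lambda>q. fst q + snd q) ` (W \<times> B q))"
      using AB by blast
    have "fst q \<in> A q" using fq \<open>q \<in> P\<close> unfolding As_def by blast
    moreover have "p2 - t \<in> B q" using p(2) \<open>q \<in> P\<close> unfolding Bs_def by blast
    then have "snd q - t \<in> (\<lambda>q. fst q + snd q) ` (W \<times> B q)"
      unfolding sq using gs(2) by (intro image_eqI[of _ _ "(\<gamma>s, p2 - t)"]) auto
    ultimately show False using nq by blast
  qed
qed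


theorem lemma4p1:
  fixes L :: "('g::{topological_ab_group_add,t2_space} \<times> 'h::{topological_ab_group_add,t2_space}) set"
    and U W :: "'h set" and \<Gamma> \<Gamma>' :: "'g set"
    and sa :: "'i \<Rightarrow> 'g" and F :: "'i filter" and s :: 'g and t :: 'h
  assumes "cut_and_project L"
    and "open U" and "U \<noteq> {}" and "compact W" and "U \<subseteq> W"
    and "model_set L U \<subseteq> \<Gamma>" and "\<Gamma> \<subseteq> model_set L W"
    and "F \<noteq> bot"
    and "point_set \<Gamma>'"
    and "vague_conv (\<lambda>a. (\<lambda>x. sa a + x) ` \<Gamma>) \<Gamma>' F"
    and "limitin (quotient_top L) (\<lambda>a. coset_of L (- sa a, 0)) (coset_of L (s, t)) F"
  shows "model_set L ((\<lambda>u. u + t) ` U) \<subseteq> (\<lambda>x. s + x) ` \<Gamma>'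
       \<and> (\<lambda>x. s + x) ` \<Gamma>' \<subseteq> model_set L ((\<lambda>w. w + t) ` W)"
proof -
  have lcG: "locally_compact_space (euclidean :: 'g topology)"
    using assms(1) by (simp add: cut_and_project_def)
  have lcH: "locally_compact_space (euclidean :: 'h topology)"
    using assms(1) by (simp add: cut_and_project_def)
  have L0: "0 \<in> L" using assms(1) by (simp add: cut_and_project_def)
  have sub: "\<forall>x\<in>L. \<forall>y\<in>L. x + y \<in> L \<and> - x \<in> L" using assms(1) by (simp add: cut_and_project_def)
  have dx: "\<forall>x\<in>L. \<exists>V. open V \<and> V \<inter> L = {x}" using assms(1) by (simp add: cut_and_project_def)
  have disc: "\<exists>V. open V \<and> V \<inter> L = {0}" using dx L0 by blast
  show ?thesis
  proof (rule conjI)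
    show "model_set L ((\<lambda>u. u + t) ` U) \<subseteq> (\<lambda>x. s + x) ` \<Gamma>'"
      by (rule part1[OF lcG sub L0 disc assms(4,2,6,7,8,9,10,11)])
    show "(\<lambda>x. s + x) ` \<Gamma>' \<subseteq> model_set L ((\<lambda>w. w + t) ` W)"
      by (rule part2[OF lcG lcH sub L0 disc assms(4,7,8,9,10,11)])
  qed
qed

end
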